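(* Let $a,b\in\mathbb F_{q^2}^*$, integers $0<i_1<i_2<(q+1)/d$ and $0\le j_1,j_2<d$, and for $0\le k<d$ put $L_k(X)=1+a\epsilon^{j_1k}X^{i_1}+b\epsilon^{j_2k}X^{i_2}$. If for some $0\le k<d$ there exists $\lambda_k\in\mu_{q+1}$ with $L_k\in\mathcal L_k(i_2,0;\lambda_k)$, then $i_1=i_2/2$, $b=a^{1-q}\epsilon^{(2j_1-j_2)k}$, $\lambda_k=b^q\epsilon^{-j_2k}$, and $\lambda_k^{(q+1)/d}=\epsilon^{-2j_1k(q+1)/d+\alpha}$, where $\alpha\in\mathbb Z/d\mathbb Z$ is defined by $a^{(q^2-1)/d}=\epsilon^\alpha$.
   Context: $q$ is a prime power, $d$ is a positive divisor of $q+1$, and $\epsilon\in\mathbb F_{q^2}^*$ has multiplicative order $d$. $\mu_{q+1}$ is the subgroup of order $q+1$ of $\mathbb F_{q^2}^*$. For $a\in\mathbb F_{q^2}$, $\bar a=a^q$; for $f(X)=\sum_{i=0}^n a_iX^i\in\mathbb F_{q^2}[X]$ with $a_n\neq0$, $\tilde f(X)=\sum_{i=0}^n\bar a_iX^{n-i}$. For $0\le k<d$, $0\le t<(q+1)/d$ and $\lambda\in\mu_{q+1}$, $\mathcal L_k(t,0;\lambda)$ is the set of $L\in\mathbb F_{q^2}[X]$ with $\deg L=t$, $\tilde L=\lambda L$ and $\gcd(L,X^{(q+1)/d}-\epsilon^k)=1$. *)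

theory Defs
  imports "HOL-Computational_Algebra.Computational_Algebra"
begin

text \<open>The field F_{q^2} is modelled by a finite field type of cardinality q^2;
  conjugation is the Frobenius x -> x^q.\<close>

definition tilde :: "nat \<Rightarrow> 'a::field poly \<Rightarrow> 'a poly" where
  "tilde q f = (\<Sum>i\<le>degree f. monom ((coeff f i) ^ q) (degree f - i))"

definition mu :: "nat \<Rightarrow> 'a::field set" where
  "mu q = {x. x ^ (q + 1) = 1}"

definition calL :: "nat \<Rightarrow> nat \<Rightarrow> 'a::field \<Rightarrow> nat \<Rightarrow> nat \<Rightarrow> 'a \<Rightarrow> 'a poly set" where
  "calL q d \<epsilon> k t lam = {L. degree L = t \<and> tilde q L = smult lam L \<and>
       coprime L (monom 1 ((q + 1) div d) - [:\<epsilon> ^ k:])}"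

end

theory Submission
  imports Defs
begin

lemma coeff_tilde: "coeff (tilde q f) n = (if n \<le> degree f then coeff f (degree f - n) ^ q else 0)"
proof -
  have "coeff (tilde q f) n = (\<Sum>i\<le>degree f. if i = degree f - n \<and> n \<le> degree f then coeff f i ^ q else 0)"
    unfolding tilde_def coeff_sum coeff_monom by (rule sum.cong) auto
  also have "\<dots> = (if n \<le> degree f then coeff f (degree f - n) ^ q else 0)"
    by (cases "n \<le> degree f") (auto simp: sum.delta')
  finally show ?thesis .
qed

lemma epow:
  fixes e :: "'a::field"
  assumes "e \<noteq> 0" "e ^ d = 1" "int d dvd x - y"
  shows "e powi x = e powi y"
proof -
  obtain t where t: "x = y + int d * t" using assms(3)
    by (metis add.commute diff_add_cancel dvdE)
  have "e powi x = e powi y * (e powi int d) powi t"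
    using assms(1) by (simp add: t power_int_add power_int_mult)
  also have "e powi int d = 1" using assms(2) by simp
  finally show ?thesis by simp
qed

lemma aux1: fixes b u v w :: "'a::field" assumes "b * (u * v * w) = 1" shows "b = inverse v * inverse (u * w)"
proof -
  have "(u * v * w) * b = 1" using assms by (simp add: mult.commute)
  hence "inverse (u * v * w) = b" by (rule inverse_unique)
  thus ?thesis by (simp add: inverse_mult_distrib mult_ac)
qed

lemma powi_neg_add: fixes e :: "'a::field" shows "e powi (- (int x + int y)) = inverse (e ^ x * e ^ y)"
proof -
  have "- (int x + int y) = - int (x + y)" by simp
  thus ?thesis by (simp only: power_int_minus power_int_of_nat power_add)
qed

theorem lemma4p4:
  fixes q d i1 i2 j1 j2 k :: nat and \<epsilon> a b lam :: "'a::{field,finite}"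
  assumes "\<exists>p n. prime p \<and> n > 0 \<and> q = p ^ n"
    and "card (UNIV :: 'a set) = q ^ 2"
    and "d > 0" and "d dvd q + 1"
    and "\<epsilon> ^ d = 1" and "\<forall>m. 0 < m \<and> m < d \<longrightarrow> \<epsilon> ^ m \<noteq> 1"
    and "a \<noteq> 0" and "b \<noteq> 0"
    and "0 < i1" and "i1 < i2" and "i2 < (q + 1) div d"
    and "j1 < d" and "j2 < d" and "k < d"
    and "lam \<in> mu q"
    and "[:1:] + monom (a * \<epsilon> ^ (j1 * k)) i1 + monom (b * \<epsilon> ^ (j2 * k)) i2
           \<in> calL q d \<epsilon> k i2 lam"
  shows "i2 = 2 * i1
    \<and> b = a powi (1 - int q) * \<epsilon> powi ((2 * int j1 - int j2) * int k)
    \<and> lam = b ^ q * \<epsilon> powi (- (int j2 * int k))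
    \<and> (\<forall>\<alpha>::int. a ^ ((q ^ 2 - 1) div d) = \<epsilon> powi \<alpha> \<longrightarrow>
         lam ^ ((q + 1) div d) = \<epsilon> powi (- (2 * int j1 * int k * int ((q + 1) div d)) + \<alpha>))"
proof -
  define A where "A = a * \<epsilon> ^ (j1 * k)"
  define B where "B = b * \<epsilon> ^ (j2 * k)"
  define L where "L = [:1:] + monom A i1 + monom B i2"
  have e0: "\<epsilon> \<noteq> 0"
  proof
    assume "\<epsilon> = 0"
    hence "\<epsilon> ^ d = 0" using assms(3) by simp
    with assms(5) show False by simp
  qed
  have A0: "A \<noteq> 0" using e0 assms(7) by (simp add: A_def)
  have B0: "B \<noteq> 0" using e0 assms(8) by (simp add: B_def)
  have q1: "q \<ge> 1" using assms(1) by (metis one_le_power prime_ge_1_nat)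
  have cL: "coeff L n = (if n = 0 then 1 else 0) + (if n = i1 then A else 0) + (if n = i2 then B else 0)" for n
    by (cases n) (auto simp: L_def coeff_monom)
  have LL: "L \<in> calL q d \<epsilon> k i2 lam" using assms(16) by (simp add: L_def A_def B_def)
  hence dL: "degree L = i2" and tL: "tilde q L = smult lam L" by (auto simp: calL_def)
  have c: "coeff (tilde q L) n = lam * coeff L n" for n using tL by simp
  have h1: "1 = lam * B" using c[of i2] assms(9,10) by (simp add: coeff_tilde dL cL)
  have h2: "B ^ q = lam" using c[of 0] assms(9,10) q1 by (simp add: coeff_tilde dL cL)
  have h3: "A ^ q = lam * coeff L (i2 - i1)" using c[of "i2 - i1"] assms(9,10) by (simp add: coeff_tilde dL cL)
  have ii: "i2 = 2 * i1"
  proof (rule ccontr)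
    assume "i2 \<noteq> 2 * i1"
    hence "coeff L (i2 - i1) = 0" using assms(9,10) by (simp add: cL; linarith)
    with h3 A0 show False by simp
  qed
  have h3': "A ^ q = lam * A" using h3 ii assms(9) by (simp add: cL)
  have key: "A ^ (q - 1) * B = 1"
  proof -
    have "A * (A ^ (q - 1) * B) = A ^ q * B" using q1
      by (metis (no_types) mult.assoc power_Suc Suc_diff_1 less_le_trans zero_less_one)
    also have "\<dots> = A * (lam * B)" using h3' by (simp add: mult.assoc mult.commute mult.left_commute)
    also have "\<dots> = A" using h1 by simp
    finally show ?thesis using A0 by (metis mult_cancel_left1)
  qed
  have lamA: "lam = A ^ (q - 1)" using key h1 B0
    by (metis mult.commute mult_cancel_right)
  define m where "m = (q + 1) div d"
  have qdm: "q + 1 = d * m" using assms(4) by (simp add: m_def)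
  have edm: "\<epsilon> ^ d = 1" by (rule assms(5))
  have g2: "b = a powi (1 - int q) * \<epsilon> powi ((2 * int j1 - int j2) * int k)"
  proof -
    have ap: "a powi (1 - int q) = inverse (a ^ (q - 1))"
    proof -
      have "1 - int q = - int (q - 1)" using q1 by simp
      thus ?thesis by (simp only: power_int_minus power_int_of_nat)
    qed
    have pm1: "(\<epsilon> ^ (j1 * k)) ^ (q - 1) = \<epsilon> ^ (j1 * k * (q - 1))" by (rule power_mult[symmetric])
    have kk: "b * (\<epsilon> ^ (j2 * k) * a ^ (q - 1) * \<epsilon> ^ (j1 * k * (q - 1))) = 1"
    proof -
      have "b * (\<epsilon> ^ (j2 * k) * a ^ (q - 1) * \<epsilon> ^ (j1 * k * (q - 1))) = a ^ (q - 1) * \<epsilon> ^ (j1 * k * (q - 1)) * (b * \<epsilon> ^ (j2 * k))"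
        by (simp only: mult_ac)
      also have "\<dots> = 1" using key unfolding A_def B_def power_mult_distrib pm1 .
      finally show ?thesis .
    qed
    have binv: "b = inverse (a ^ (q - 1)) * inverse (\<epsilon> ^ (j2 * k) * \<epsilon> ^ (j1 * k * (q - 1)))"
      by (rule aux1[OF kk])
    have ee: "\<epsilon> powi ((2 * int j1 - int j2) * int k) = \<epsilon> powi (- (int (j2 * k) + int (j1 * k * (q - 1))))"
    proof (rule epow[OF e0 edm])
      have hq: "int (q - 1) = int q - 1" using q1 by (simp add: of_nat_diff)
      have "(2 * int j1 - int j2) * int k - - (int (j2 * k) + int (j1 * k * (q - 1))) = int j1 * int k * int (q + 1)"
        unfolding of_nat_mult of_nat_add hq of_nat_1 by algebra
      also have "\<dots> = int d * (int j1 * int k * int m)" unfolding qdm of_nat_mult by algebra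
      finally show "int d dvd (2 * int j1 - int j2) * int k - - (int (j2 * k) + int (j1 * k * (q - 1)))" by simp
    qed
    have ee2: "\<epsilon> powi (- (int (j2 * k) + int (j1 * k * (q - 1)))) = inverse (\<epsilon> ^ (j2 * k) * \<epsilon> ^ (j1 * k * (q - 1)))"
      by (rule powi_neg_add)
    show ?thesis unfolding ap ee ee2 by (rule binv)
  qed
  have g3: "lam = b ^ q * \<epsilon> powi (- (int j2 * int k))"
  proof -
    have "lam = B ^ q" using h2 by simp
    also have "\<dots> = b ^ q * (\<epsilon> ^ (j2 * k)) ^ q" unfolding B_def by (rule power_mult_distrib)
    also have "(\<epsilon> ^ (j2 * k)) ^ q = \<epsilon> ^ (j2 * k * q)" by (rule power_mult[symmetric])
    also have "\<dots> = \<epsilon> powi int (j2 * k * q)" by (rule power_int_of_nat[symmetric])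
    also have "\<epsilon> powi int (j2 * k * q) = \<epsilon> powi (- (int j2 * int k))"
    proof (rule epow[OF e0 edm])
      have "int (j2 * k * q) - - (int j2 * int k) = int d * (int j2 * int k * int m)"
      proof -
        have "int d * (int j2 * int k * int m) = int j2 * int k * int (q + 1)" unfolding qdm of_nat_mult by algebra
        thus ?thesis unfolding of_nat_mult of_nat_add of_nat_1 by algebra
      qed
      thus "int d dvd int (j2 * k * q) - - (int j2 * int k)" by simp
    qed
    finally show ?thesis .
  qed
  have g4: "\<forall>\<alpha>::int. a ^ ((q ^ 2 - 1) div d) = \<epsilon> powi \<alpha> \<longrightarrow>
         lam ^ ((q + 1) div d) = \<epsilon> powi (- (2 * int j1 * int k * int ((q + 1) div d)) + \<alpha>)"
  proof (intro allI impI)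
    fix \<alpha> :: int assume ha: "a ^ ((q ^ 2 - 1) div d) = \<epsilon> powi \<alpha>"
    have "q ^ 2 - 1 = (q - 1) * (q + 1)" using q1
      by (cases q) (auto simp: power2_eq_square algebra_simps)
    also have "\<dots> = (q - 1) * (d * m)" unfolding qdm ..
    finally have "q ^ 2 - 1 = d * ((q - 1) * m)" by (simp only: mult_ac)
    hence qq: "(q ^ 2 - 1) div d = (q - 1) * m" using assms(3) by simp
    have "lam ^ m = A ^ ((q - 1) * m)" unfolding lamA by (rule power_mult[symmetric])
    also have "\<dots> = a ^ ((q - 1) * m) * (\<epsilon> ^ (j1 * k)) ^ ((q - 1) * m)"
      unfolding A_def by (rule power_mult_distrib)
    also have "(\<epsilon> ^ (j1 * k)) ^ ((q - 1) * m) = \<epsilon> ^ (j1 * k * ((q - 1) * m))" by (rule power_mult[symmetric])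
    also have "\<dots> = \<epsilon> powi int (j1 * k * ((q - 1) * m))" by (rule power_int_of_nat[symmetric])
    also have "\<epsilon> powi int (j1 * k * ((q - 1) * m)) = \<epsilon> powi (- (2 * int j1 * int k * int m))"
    proof (rule epow[OF e0 edm])
      have "int (j1 * k * ((q - 1) * m)) - - (2 * int j1 * int k * int m) = int j1 * int k * int m * int (q + 1)"
      proof -
        have hq: "int (q - 1) = int q - 1" using q1 by (simp add: of_nat_diff)
        show ?thesis unfolding of_nat_mult of_nat_add hq of_nat_1 by algebra
      qed
      also have "\<dots> = int d * (int j1 * int k * int m * int m)" unfolding qdm of_nat_mult by algebra
      finally show "int d dvd int (j1 * k * ((q - 1) * m)) - - (2 * int j1 * int k * int m)" by simp
    qed
    finally have lm: "lam ^ m = a ^ ((q - 1) * m) * \<epsilon> powi (- (2 * int j1 * int k * int m))" .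
    have pa: "\<epsilon> powi (- (2 * int j1 * int k * int m) + \<alpha>) = \<epsilon> powi (- (2 * int j1 * int k * int m)) * \<epsilon> powi \<alpha>"
      using e0 by (intro power_int_add) simp
    show "lam ^ ((q + 1) div d) = \<epsilon> powi (- (2 * int j1 * int k * int ((q + 1) div d)) + \<alpha>)"
      unfolding m_def[symmetric] pa lm using ha qq by (simp only: mult.commute)
  qed
  show ?thesis using ii g2 g3 g4 by blast
qed

end
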